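(* Let $(\overline M,\varphi,\xi,\eta,g)$ be an almost $(\epsilon)$-contact metric manifold, $k\ge1$, $M$ as in the context, and $D=\bigoplus_{i=0}^kD_i$ a $k$-slant distribution on $M$ (with invariant component $D_0$) such that $D\perp\xi$. Let $G$ be the $g$-orthogonal complement of $D\oplus\langle\xi\rangle$ in $T\overline M|_M$, and let $f,w$ denote the orthogonal projections of $\varphi$ onto $D$ and onto $D^\perp$. Then $w(D_1),\dots,w(D_k)$ are mutually orthogonal subspaces of $G$ and $$G=\bigoplus_{i=1}^k w(D_i)\oplus H\quad(\text{orthogonal sum}),$$ where $H$ is the orthogonal complement of $\bigoplus_{i=1}^kw(D_i)$ in $G$, and $f(H)=\{0\}$. Moreover $\varphi(H)=w(H)=H$.
   Context: An almost $(\epsilon)$-contact metric manifold $(\overline M,\varphi,\xi,\eta,g)$, $\epsilon\in\{-1,1\}$, is a Riemannian manifold $(\overline M,g)$ with a unit vector field $\xi$, its dual 1-form $\eta(X)=g(X,\xi)$, and a $(1,1)$-tensor field $\varphi$ with $g(\varphi X,Y)=\epsilon g(X,\varphi Y)$ and $\varphi^2=\epsilon(I-\eta\otimes\xi)$. $M$ is either $\overline M$ or an immersed submanifold with $\xi$ tangent to $M$; $\langle\xi\rangle$ is the line bundle spanned by $\xi$. A distribution on $M$ is a smooth subbundle of constant rank of $T\overline M|_M$. For a distribution $D$ and $Z\in T_x\overline M$, $fZ$, $wZ$ are the $g$-orthogonal projections of $\varphi Z$ onto $D_x$ and onto its orthogonal complement $D_x^\perp$ in $T_x\overline M$; $f$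 is the component of $\varphi$ into $D$. The angle between a nonzero vector $u$ and a subspace $V$ is $\theta\in[0,\frac\pi2]$ with $\cos\theta=\|\mathrm{pr}_Vu\|/\|u\|$. A non-null distribution $D$ is slant with slant angle $\theta\in(0,\frac\pi2]$ if for all $x\in M$, $v\in D_x\setminus\{0\}$: $\varphi v\ne0$ and the angle between $\varphi v$ and $D_x$ is $\theta$. For $k\ge1$, $D$ is a $k$-slant distribution if there is a $g$-orthogonal decomposition $D=\bigoplus_{i=0}^kD_i$ into distributions with $D_i\ne\{0\}$ ($1\le i\le k$), $D_0$ possibly $\{0\}$, and pairwise distinct $\theta_1,\dots,\theta_k\in(0,\frac\pi2]$ with: (i) $D_i$ slant with angle $\theta_i$ ($1\le i\le k$); (ii) $\varphi(D_0)\subseteq D_0$; (iii) $f(D_i)\subseteq D_i$ ($1\le i\le k$). $D_0$ is the invariant component. *)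

theory Defs
  imports "HOL-Analysis.Analysis"
begin

text \<open>Pointwise linear algebra on a model tangent space 'v (finite-dimensional real
inner product space); the metric g is the inner product.\<close>

definition orth_compl :: "'v::real_inner set \<Rightarrow> 'v set" where
  "orth_compl V = {u. \<forall>v\<in>V. u \<bullet> v = 0}"

definition proj :: "'v::real_inner set \<Rightarrow> 'v \<Rightarrow> 'v" where
  "proj V u = (THE p. p \<in> V \<and> u - p \<in> orth_compl V)"

definition vs_angle :: "'v::real_inner \<Rightarrow> 'v set \<Rightarrow> real" where
  "vs_angle u V = arccos (norm (proj V u) / norm u)"

definition almost_eps_contact :: "real \<Rightarrow> ('v::real_inner \<Rightarrow> 'v) \<Rightarrow> 'v \<Rightarrow> bool" where
  "almost_eps_contact \<epsilon> \<phi> \<xi> \<longleftrightarrow>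
     (\<epsilon> = 1 \<or> \<epsilon> = -1) \<and> linear \<phi> \<and> norm \<xi> = 1 \<and>
     (\<forall>X Y. \<phi> X \<bullet> Y = \<epsilon> * (X \<bullet> \<phi> Y)) \<and>
     (\<forall>X. \<phi> (\<phi> X) = \<epsilon> *\<^sub>R (X - (X \<bullet> \<xi>) *\<^sub>R \<xi>))"

definition slant_at :: "('v::real_inner \<Rightarrow> 'v) \<Rightarrow> 'v set \<Rightarrow> real \<Rightarrow> bool" where
  "slant_at \<phi> V \<theta> \<longleftrightarrow> V \<noteq> {0} \<and> 0 < \<theta> \<and> \<theta> \<le> pi/2 \<and>
     (\<forall>v\<in>V - {0}. \<phi> v \<noteq> 0 \<and> vs_angle (\<phi> v) V = \<theta>)"

text \<open>k-slant distribution D = D_0 + ... + D_k over the point set M, with fixed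
angles theta_1..theta_k; f is the D-component of phi.\<close>
definition k_slant :: "'x set \<Rightarrow> ('x \<Rightarrow> 'v::real_inner \<Rightarrow> 'v) \<Rightarrow> nat \<Rightarrow>
     (nat \<Rightarrow> 'x \<Rightarrow> 'v set) \<Rightarrow> (nat \<Rightarrow> real) \<Rightarrow> bool" where
  "k_slant M \<phi> k Di \<theta> \<longleftrightarrow> 1 \<le> k \<and> inj_on \<theta> {1..k} \<and>
     (\<forall>x\<in>M.
        (\<forall>i\<in>{0..k}. subspace (Di i x)) \<and>
        (\<forall>i\<in>{0..k}. \<forall>j\<in>{0..k}. i \<noteq> j \<longrightarrow> (\<forall>a\<in>Di i x. \<forall>b\<in>Di j x. a \<bullet> b = 0)) \<and>
        (\<forall>i\<in>{1..k}. slant_at (\<phi> x) (Di i x) (\<theta> i)) \<and>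
        \<phi> x ` Di 0 x \<subseteq> Di 0 x \<and>
        (\<forall>i\<in>{1..k}. (\<lambda>v. proj (span (\<Union>j\<in>{0..k}. Di j x)) (\<phi> x v)) ` Di i x \<subseteq> Di i x))"

end

theory Submission
  imports Defs
begin


lemma oc_subspace: "subspace (orth_compl (S::'v::real_inner set))"
  unfolding subspace_def orth_compl_def by (auto simp: inner_add_left)

lemma oc_span: "orth_compl (span (S::'v::real_inner set)) = orth_compl S"
proof
  show "orth_compl (span S) \<subseteq> orth_compl S" unfolding orth_compl_def using span_superset by blast
  show "orth_compl S \<subseteq> orth_compl (span S)"
    unfolding orth_compl_def using orthogonal_to_span unfolding orthogonal_def by blast
qed

lemma proj_unique:
  assumes "subspace S" "p \<in> S" "u - p \<in> orth_compl S"
  shows "proj S u = p"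
  unfolding proj_def
proof (rule the_equality)
  show "p \<in> S \<and> u - p \<in> orth_compl S" using assms by simp
  fix q assume q: "q \<in> S \<and> u - q \<in> orth_compl S"
  have "q - p \<in> S" using assms q by (simp add: subspace_diff)
  moreover have "q - p = (u - p) - (u - q)" by simp
  hence "q - p \<in> orth_compl S" using assms q oc_subspace by (metis subspace_diff)
  ultimately have "(q - p) \<bullet> (q - p) = 0" unfolding orth_compl_def by blast
  thus "q = p" by simp
qed

lemma proj_exists:
  fixes S :: "'v::euclidean_space set"
  assumes "subspace S"
  shows "proj S u \<in> S \<and> u - proj S u \<in> orth_compl S"
proof -
  obtain y z where y: "y \<in> span S" and z: "\<And>w. w \<in> span S \<Longrightarrow> orthogonal z w" and e: "u = y + z"
    using orthogonal_subspace_decomp_exists by blast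
  have "y \<in> S" using y assms by (metis span_eq_iff)
  moreover have "u - y \<in> orth_compl S" using z e span_superset unfolding orth_compl_def orthogonal_def by auto
  ultimately show ?thesis using proj_unique[OF assms] by simp
qed

lemma proj_linear:
  fixes S :: "'v::euclidean_space set"
  assumes S: "subspace S"
  shows "linear (proj S)"
proof (rule linearI)
  fix a b
  have e: "a + b - (proj S a + proj S b) = (a - proj S a) + (b - proj S b)" by (simp add: algebra_simps)
  show "proj S (a + b) = proj S a + proj S b"
    apply (rule proj_unique[OF S])
    using proj_exists[OF S, of a] proj_exists[OF S, of b] S oc_subspace[of S]
     apply (simp add: subspace_add)
    unfolding e using proj_exists[OF S, of a] proj_exists[OF S, of b] oc_subspace[of S]
    by (simp add: subspace_add)
next
  fix c :: real and a
  have e: "c *\<^sub>R a - c *\<^sub>R proj S a = c *\<^sub>R (a - proj S a)" by (simp add: algebra_simps)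
  show "proj S (c *\<^sub>R a) = c *\<^sub>R proj S a"
    apply (rule proj_unique[OF S])
    using proj_exists[OF S, of a] S
     apply (simp add: subspace_scale)
    unfolding e using proj_exists[OF S, of a] oc_subspace[of S]
    by (simp add: subspace_scale)
qed

lemma proj_compl:
  fixes S :: "'v::euclidean_space set"
  assumes S: "subspace S"
  shows "proj (orth_compl S) u = u - proj S u"
  apply (rule proj_unique[OF oc_subspace])
  using proj_exists[OF S, of u] unfolding orth_compl_def by (auto simp: inner_commute)


lemma point:
  fixes \<phi> :: "'v::euclidean_space \<Rightarrow> 'v" and \<xi> :: 'v and Di :: "nat \<Rightarrow> 'v set"
  assumes ac: "almost_eps_contact \<epsilon> \<phi> \<xi>"
  and sub: "\<forall>i\<in>{0..k}. subspace (Di i)"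
  and orth: "\<forall>i\<in>{0..k}. \<forall>j\<in>{0..k}. i \<noteq> j \<longrightarrow> (\<forall>a\<in>Di i. \<forall>b\<in>Di j. a \<bullet> b = 0)"
  and inv0: "\<phi> ` Di 0 \<subseteq> Di 0"
  and finv: "\<forall>i\<in>{1..k}. (\<lambda>v. proj (span (\<Union>j\<in>{0..k}. Di j)) (\<phi> v)) ` Di i \<subseteq> Di i"
  and perp: "\<forall>v\<in>span (\<Union>i\<in>{0..k}. Di i). v \<bullet> \<xi> = 0"
  shows "let D = span (\<Union>i\<in>{0..k}. Di i);
        G = orth_compl (span (D \<union> {\<xi>}));
        f = (\<lambda>Z. proj D (\<phi> Z));
        w = (\<lambda>Z. proj (orth_compl D) (\<phi> Z));
        W = span (\<Union>i\<in>{1..k}. w ` Di i);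
        H = G \<inter> orth_compl W
    in (\<forall>i\<in>{1..k}. subspace (w ` Di i) \<and> w ` Di i \<subseteq> G) \<and>
       (\<forall>i\<in>{1..k}. \<forall>j\<in>{1..k}. i \<noteq> j \<longrightarrow> (\<forall>a\<in>w ` Di i. \<forall>b\<in>w ` Di j. a \<bullet> b = 0)) \<and>
       G = {a + h | a h. a \<in> W \<and> h \<in> H} \<and>
       f ` H = {0} \<and> \<phi> ` H = H \<and> w ` H = H"
proof -
  define D where "D = span (\<Union>i\<in>{0..k}. Di i)"
  define G where "G = orth_compl (span (D \<union> {\<xi>}))"
  define f where "f = (\<lambda>Z. proj D (\<phi> Z))"
  define w where "w = (\<lambda>Z. proj (orth_compl D) (\<phi> Z))"
  define W where "W = span (\<Union>i\<in>{1..k}. w ` Di i)"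
  define H where "H = G \<inter> orth_compl W"
  have eps: "\<epsilon> * \<epsilon> = 1" using ac unfolding almost_eps_contact_def by auto
  have lin: "linear \<phi>" using ac unfolding almost_eps_contact_def by auto
  have xi1: "\<xi> \<bullet> \<xi> = 1" using ac unfolding almost_eps_contact_def by (simp add: norm_eq_1)
  have sym: "\<And>X Y. \<phi> X \<bullet> Y = \<epsilon> * (X \<bullet> \<phi> Y)" using ac unfolding almost_eps_contact_def by auto
  have sq: "\<And>X. \<phi> (\<phi> X) = \<epsilon> *\<^sub>R (X - (X \<bullet> \<xi>) *\<^sub>R \<xi>)" using ac unfolding almost_eps_contact_def by auto
  have "\<phi> (\<phi> \<xi>) = 0" using sq xi1 by simp
  hence "\<phi> \<xi> \<bullet> \<phi> \<xi> = 0" using sym[of \<xi> "\<phi> \<xi>"] by simp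
  hence phixi: "\<phi> \<xi> = 0" by simp
  have etaphi: "\<And>X. \<phi> X \<bullet> \<xi> = 0" using sym phixi by simp
  have pp: "\<phi> X \<bullet> \<phi> Y = X \<bullet> Y - (X \<bullet> \<xi>) * (Y \<bullet> \<xi>)" for X Y
  proof -
    have "\<phi> X \<bullet> \<phi> Y = \<epsilon> * (X \<bullet> \<phi> (\<phi> Y))" by (rule sym)
    also have "\<dots> = (\<epsilon> * \<epsilon>) * (X \<bullet> Y - (X \<bullet> \<xi>) * (Y \<bullet> \<xi>))"
      by (simp add: sq inner_diff_right algebra_simps)
    finally show ?thesis using eps by simp
  qed
  have Dsub: "subspace D" unfolding D_def by simp
  have DiD: "\<And>i. i\<in>{0..k} \<Longrightarrow> Di i \<subseteq> D" unfolding D_def using span_superset by fastforce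
  have Dxi: "\<And>v. v \<in> D \<Longrightarrow> v \<bullet> \<xi> = 0" using perp D_def by auto
  have fD: "f Z \<in> D" for Z using proj_exists[OF Dsub] f_def by simp
  have wD: "w Z \<in> orth_compl D" for Z using proj_exists[OF Dsub] proj_compl[OF Dsub] w_def by simp
  have weq: "w Z = \<phi> Z - f Z" for Z using proj_compl[OF Dsub] w_def f_def by simp
  have fw: "\<phi> Z = f Z + w Z" for Z using weq by simp
  have linw: "linear w"
    using linear_compose[OF lin proj_linear[OF oc_subspace[of D]]] unfolding w_def by (simp add: o_def)
  have Gchar: "G = {u. (\<forall>v\<in>D. u \<bullet> v = 0) \<and> u \<bullet> \<xi> = 0}"
    unfolding G_def oc_span unfolding orth_compl_def by auto
  have Gsub: "subspace G" unfolding G_def by (rule oc_subspace)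
  have wf0: "w a \<bullet> f b = 0" for a b using wD fD unfolding orth_compl_def by auto
  have fw0: "f a \<bullet> w b = 0" for a b using wf0 by (simp add: inner_commute)
  have c1: "\<forall>i\<in>{1..k}. subspace (w ` Di i) \<and> w ` Di i \<subseteq> G"
  proof
    fix i assume i: "i \<in> {1..k}"
    have "subspace (w ` Di i)" using linear_subspace_image[OF linw] sub i by auto
    moreover have "w v \<in> G" for v
    proof -
      have "w v \<bullet> \<xi> = 0" using weq etaphi Dxi[OF fD] by (simp add: inner_diff_left)
      thus ?thesis using wD unfolding Gchar orth_compl_def by auto
    qed
    ultimately show "subspace (w ` Di i) \<and> w ` Di i \<subseteq> G" by auto
  qed
  have ww: "w v \<bullet> w u = \<phi> v \<bullet> \<phi> u - f v \<bullet> f u" for v u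
  proof -
    have "\<phi> v \<bullet> \<phi> u = (f v + w v) \<bullet> (f u + w u)" using fw by simp
    also have "\<dots> = f v \<bullet> f u + w v \<bullet> w u" by (simp add: inner_add_left inner_add_right wf0 fw0)
    finally show ?thesis by simp
  qed
  have c2: "\<forall>i\<in>{1..k}. \<forall>j\<in>{1..k}. i \<noteq> j \<longrightarrow> (\<forall>a\<in>w ` Di i. \<forall>b\<in>w ` Di j. a \<bullet> b = 0)"
  proof (intro ballI impI)
    fix i j a b assume i: "i \<in> {1..k}" and j: "j \<in> {1..k}" and ij: "i \<noteq> j"
      and a: "a \<in> w ` Di i" and b: "b \<in> w ` Di j"
    obtain v where v: "v \<in> Di i" "a = w v" using a by auto
    obtain u where u: "u \<in> Di j" "b = w u" using b by auto
    have i0: "i \<in> {0..k}" and j0: "j \<in> {0..k}" using i j by auto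
    have "v \<bullet> u = 0" using orth i0 j0 ij v u by blast
    moreover have "f v \<in> Di i" using finv i v unfolding f_def D_def by blast
    moreover have "f u \<in> Di j" using finv j u unfolding f_def D_def by blast
    ultimately have "f v \<bullet> f u = 0" "v \<bullet> u = 0" using orth i0 j0 ij by blast+
    moreover have "v \<bullet> \<xi> = 0" using Dxi DiD i0 v by blast
    ultimately show "a \<bullet> b = 0" using v u ww pp by simp
  qed
  have WG: "W \<subseteq> G" unfolding W_def using c1 Gsub by (intro span_minimal) auto
  have Wsub: "subspace W" unfolding W_def by simp
  have Hsub: "subspace H" unfolding H_def using Gsub oc_subspace by (rule subspace_inter)
  have c3: "G = {a + h | a h. a \<in> W \<and> h \<in> H}"
  proof
    show "G \<subseteq> {a + h | a h. a \<in> W \<and> h \<in> H}"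
    proof
      fix g assume g: "g \<in> G"
      have "proj W g \<in> W" "g - proj W g \<in> orth_compl W" using proj_exists[OF Wsub] by auto
      moreover have "g - proj W g \<in> G" using g WG \<open>proj W g \<in> W\<close> Gsub by (auto intro: subspace_diff)
      ultimately show "g \<in> {a + h | a h. a \<in> W \<and> h \<in> H}" unfolding H_def
        by (intro CollectI exI[of _ "proj W g"] exI[of _ "g - proj W g"]) auto
    qed
    show "{a + h | a h. a \<in> W \<and> h \<in> H} \<subseteq> G"
      using WG Gsub unfolding H_def by (auto intro: subspace_add)
  qed
  have wDW: "w v \<in> W" if v: "v \<in> D" for v
  proof -
    have "subspace {v. w v \<in> W}"
      unfolding subspace_def
    proof (intro conjI allI ballI)
      show "0 \<in> {v. w v \<in> W}" using linear_0[OF linw] subspace_0[OF Wsub] by simp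
    next
      fix x y assume "x \<in> {v. w v \<in> W}" "y \<in> {v. w v \<in> W}"
      thus "x + y \<in> {v. w v \<in> W}" using linear_add[OF linw] subspace_add[OF Wsub] by simp
    next
      fix c :: real and x assume "x \<in> {v. w v \<in> W}"
      thus "c *\<^sub>R x \<in> {v. w v \<in> W}" using linear_scale[OF linw] subspace_scale[OF Wsub] by simp
    qed
    moreover have "(\<Union>i\<in>{0..k}. Di i) \<subseteq> {v. w v \<in> W}"
    proof
      fix v assume "v \<in> (\<Union>i\<in>{0..k}. Di i)"
      then obtain i where i: "i \<in> {0..k}" "v \<in> Di i" by auto
      show "v \<in> {v. w v \<in> W}"
      proof (cases "i = 0")
        case True
        hence "v \<in> Di 0" using i by simp
        hence "\<phi> v \<in> Di 0" using inv0 by blast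
        moreover have "Di 0 \<subseteq> D" using DiD by simp
        ultimately have "\<phi> v \<in> D" by blast
        hence "f v = \<phi> v" unfolding f_def
          by (intro proj_unique[OF Dsub]) (auto simp: orth_compl_def)
        hence "w v = 0" using weq by simp
        thus ?thesis using Wsub by (simp add: subspace_0)
      next
        case False
        hence i1: "i \<in> {1..k}" using i by auto
        have "w v \<in> w ` Di i" using i(2) by (rule imageI)
        hence "w v \<in> (\<Union>j\<in>{1..k}. w ` Di j)" using i1 by blast
        hence "w v \<in> W" unfolding W_def by (rule subsetD[OF span_superset])
        thus ?thesis by simp
      qed
    qed
    ultimately have "D \<subseteq> {v. w v \<in> W}" unfolding D_def by (rule span_minimal[rotated])
    thus ?thesis using v by auto
  qed
  have hG: "h \<in> H \<Longrightarrow> (\<forall>v\<in>D. h \<bullet> v = 0) \<and> h \<bullet> \<xi> = 0" for h unfolding H_def Gchar by auto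
  have hW: "h \<in> H \<Longrightarrow> u \<in> W \<Longrightarrow> h \<bullet> u = 0" for h u unfolding H_def orth_compl_def by auto
  have Hphi: "\<phi> h \<in> orth_compl D" if h: "h \<in> H" for h
    unfolding orth_compl_def
  proof (intro CollectI ballI)
    fix v assume v: "v \<in> D"
    have "\<phi> h \<bullet> v = \<epsilon> * (h \<bullet> (f v + w v))" using sym fw by metis
    also have "\<dots> = 0" using hG[OF h] hW[OF h wDW[OF v]] fD by (simp add: inner_add_right)
    finally show "\<phi> h \<bullet> v = 0" .
  qed
  have fH0: "f h = 0" if h: "h \<in> H" for h
    unfolding f_def using Hphi[OF h] by (intro proj_unique[OF Dsub]) (auto simp: subspace_0[OF Dsub])
  have H0: "0 \<in> H" using Hsub by (simp add: subspace_0)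
  have c4: "f ` H = {0}" using fH0 H0 by auto
  have phiH: "\<phi> h \<in> H" if h: "h \<in> H" for h
  proof -
    have "\<phi> h \<in> G" using Hphi[OF h] etaphi unfolding Gchar orth_compl_def by auto
    moreover have "\<phi> h \<in> orth_compl W"
      unfolding W_def oc_span unfolding orth_compl_def
    proof (intro CollectI ballI)
      fix b assume "b \<in> (\<Union>i\<in>{1..k}. w ` Di i)"
      then obtain i v where i: "i \<in> {1..k}" and v: "v \<in> Di i" and b: "b = w v" by auto
      have vD: "v \<in> D" using DiD[of i] i v by auto
      have "\<phi> h \<bullet> b = \<phi> h \<bullet> \<phi> v - \<phi> h \<bullet> f v" using b weq by (simp add: inner_diff_right)
      also have "\<dots> = 0" using pp[of h v] hG[OF h] vD Hphi[OF h] fD unfolding orth_compl_def by auto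
      finally show "\<phi> h \<bullet> b = 0" .
    qed
    ultimately show ?thesis unfolding H_def by auto
  qed
  have c5: "\<phi> ` H = H"
  proof
    show "\<phi> ` H \<subseteq> H" using phiH by auto
    show "H \<subseteq> \<phi> ` H"
    proof
      fix h assume h: "h \<in> H"
      have "\<phi> (\<epsilon> *\<^sub>R \<phi> h) = \<epsilon> *\<^sub>R \<phi> (\<phi> h)" using lin by (simp add: linear_scale)
      also have "\<dots> = (\<epsilon> * \<epsilon>) *\<^sub>R h" using sq hG[OF h] by simp
      finally have "\<phi> (\<epsilon> *\<^sub>R \<phi> h) = h" using eps by simp
      moreover have "\<epsilon> *\<^sub>R \<phi> h \<in> H" using phiH[OF h] Hsub by (simp add: subspace_scale)
      ultimately show "h \<in> \<phi> ` H" by (metis image_eqI)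
    qed
  qed
  have c6: "w ` H = H"
  proof -
    have "w ` H = \<phi> ` H" using weq fH0 by (intro image_cong) auto
    thus ?thesis using c5 by simp
  qed
  show ?thesis unfolding Let_def
    using c1 c2 c3 c4 c5 c6
    unfolding D_def[symmetric] G_def[symmetric] f_def[symmetric] w_def[symmetric] W_def[symmetric] H_def[symmetric]
    by blast
qed

theorem mainTheorem5:
  fixes M :: "'x set" and \<epsilon> :: real
    and \<phi> :: "'x \<Rightarrow> 'v::euclidean_space \<Rightarrow> 'v" and \<xi> :: "'x \<Rightarrow> 'v"
    and k :: nat and Di :: "nat \<Rightarrow> 'x \<Rightarrow> 'v set" and \<theta> :: "nat \<Rightarrow> real"
  assumes ac: "\<forall>x\<in>M. almost_eps_contact \<epsilon> (\<phi> x) (\<xi> x)"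
    and ks: "k_slant M \<phi> k Di \<theta>"
    and perp: "\<forall>x\<in>M. \<forall>v\<in>span (\<Union>i\<in>{0..k}. Di i x). v \<bullet> \<xi> x = 0"
  shows "\<forall>x\<in>M.
    let D = span (\<Union>i\<in>{0..k}. Di i x);
        G = orth_compl (span (D \<union> {\<xi> x}));
        f = (\<lambda>Z. proj D (\<phi> x Z));
        w = (\<lambda>Z. proj (orth_compl D) (\<phi> x Z));
        W = span (\<Union>i\<in>{1..k}. w ` Di i x);
        H = G \<inter> orth_compl W
    in (\<forall>i\<in>{1..k}. subspace (w ` Di i x) \<and> w ` Di i x \<subseteq> G) \<and>
       (\<forall>i\<in>{1..k}. \<forall>j\<in>{1..k}. i \<noteq> j \<longrightarrow> (\<forall>a\<in>w ` Di i x. \<forall>b\<in>w ` Di j x. a \<bullet> b = 0)) \<and>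
       G = {a + h | a h. a \<in> W \<and> h \<in> H} \<and>
       f ` H = {0} \<and> \<phi> x ` H = H \<and> w ` H = H"
  using ac perp ks unfolding k_slant_def
  by (intro ballI point) auto

end
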